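(* For every real $y\ge0$, $\displaystyle\sum_{k,\ell\in\mathbb{N}}\frac{y^{k\ell}}{(k!)^\ell\,\ell!}<\infty$. Moreover, $\displaystyle\sum_{k,\ell\in\mathbb{N}}\frac{1}{(k!)^\ell\,\ell!}\le e^2$.
   Context: $\mathbb{N}=\{1,2,3,\dots\}$. *)

theory Defs
  imports "HOL-Analysis.Analysis"
begin

end

theory Submission
  imports Defs
begin

lemma exp_has_sum:
  fixes x :: real assumes "x \<ge> 0"
  shows "((\<lambda>n. x ^ n / fact n) has_sum exp x) UNIV"
proof -
  have s: "(\<lambda>n. x ^ n / fact n) sums exp x"
    using exp_converges[of x] by (simp add: divide_inverse mult.commute)
  show ?thesis
    by (rule norm_summable_imp_has_sum) (use s assms in \<open>auto simp: sums_iff\<close>)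
qed

lemma exp_term_le:
  fixes x :: real assumes "x \<ge> 0"
  shows "x ^ k / fact k \<le> exp x"
proof -
  have s: "(\<lambda>n. x ^ n / fact n) sums exp x"
    using exp_converges[of x] by (simp add: divide_inverse mult.commute)
  have "sum (\<lambda>n. x ^ n / fact n) {k} \<le> suminf (\<lambda>n. x ^ n / fact n)"
    by (rule sum_le_suminf) (use s assms in \<open>auto simp: sums_iff\<close>)
  then show ?thesis using s by (simp add: sums_iff)
qed

lemma prod_summable:
  fixes a b :: "nat \<Rightarrow> real"
  assumes a: "a summable_on A" and b: "b summable_on B"
    and a0: "\<And>k. a k \<ge> 0" and b0: "\<And>l. b l \<ge> 0"
  shows "(\<lambda>(k,l). a k * b l) summable_on (A \<times> B)"
    and "infsum (\<lambda>(k,l). a k * b l) (A \<times> B) = infsum a A * infsum b B"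
proof -
  have h: "((\<lambda>l. (\<lambda>(k,l). a k * b l) (k, l)) has_sum a k * infsum b B) B" for k
    using has_sum_cmult_right[OF has_sum_infsum[OF b], of "a k"] by simp
  have g: "(\<lambda>k. a k * infsum b B) summable_on A"
    using summable_on_cmult_left[OF a] by simp
  show S: "(\<lambda>(k,l). a k * b l) summable_on (A \<times> B)"
    by (rule summable_on_SigmaI[OF h g]) (auto intro: mult_nonneg_nonneg a0 b0)
  have "((\<lambda>(k,l). a k * b l) has_sum infsum (\<lambda>k. a k * infsum b B) A) (A \<times> B)"
    by (rule has_sum_SigmaI[OF h has_sum_infsum[OF g] S])
  then show "infsum (\<lambda>(k,l). a k * b l) (A \<times> B) = infsum a A * infsum b B"
    using infsum_cmult_left'[of a "infsum b B" A] by (simp add: infsumI)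
qed

lemma pow_le_aux:
  fixes a C :: real assumes "0 \<le> a" "a \<le> C" "1 \<le> C" "l \<ge> 1"
  shows "a ^ l \<le> a * C ^ l"
proof -
  obtain m where l: "l = Suc m" using assms(4) by (cases l) auto
  have "a ^ m \<le> C ^ m" by (rule power_mono) (use assms in auto)
  also have "\<dots> \<le> C ^ Suc m" using assms by (simp add: power_increasing)
  finally have "a * a ^ m \<le> a * C ^ Suc m" using assms by (simp add: mult_left_mono)
  then show ?thesis using l by simp
qed

lemma term_eq: "(y::real) ^ (k * l) / ((fact k) ^ l * fact l) = (y ^ k / fact k) ^ l / fact l"
  by (simp add: power_mult power_divide)

lemma exp_summable_sub:
  fixes x :: real assumes "x \<ge> 0"
  shows "(\<lambda>n. x ^ n / fact n) summable_on {1..}"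
  using summable_on_subset_banach[OF has_sum_imp_summable[OF exp_has_sum[OF assms]]] by simp

lemma part1:
  fixes y :: real assumes y: "y \<ge> 0"
  shows "(\<lambda>(k::nat, l::nat). y ^ (k * l) / ((fact k) ^ l * fact l)) summable_on ({1..} \<times> {1..})"
proof -
  define C where "C = max 1 (exp y)"
  have C: "1 \<le> C" "exp y \<le> C" unfolding C_def by auto
  have P: "(\<lambda>(k,l). (y ^ k / fact k) * (C ^ l / fact l)) summable_on (({1..}::nat set) \<times> ({1..}::nat set))"
    by (rule prod_summable(1)[OF exp_summable_sub[OF y] exp_summable_sub]) (use y C in auto)
  show ?thesis
  proof (rule summable_on_comparison_test[OF P])
    fix x :: "nat \<times> nat" assume x: "x \<in> {1..} \<times> {1..}"
    obtain k l where kl: "x = (k, l)" by (cases x)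
    have l1: "l \<ge> 1" using x kl by auto
    have a: "0 \<le> y ^ k / fact k" "y ^ k / fact k \<le> C" using y exp_term_le[OF y, of k] C by auto
    have "(y ^ k / fact k) ^ l \<le> (y ^ k / fact k) * C ^ l" by (rule pow_le_aux) (use a C l1 in auto)
    then have "(y ^ k / fact k) ^ l / fact l \<le> (y ^ k / fact k) * C ^ l / fact l"
      by (rule divide_right_mono) simp
    then show "(\<lambda>(k, l). y ^ (k * l) / (fact k ^ l * fact l)) x \<le> (\<lambda>(k, l). y ^ k / fact k * (C ^ l / fact l)) x"
      using kl by (simp add: term_eq)
    show "0 \<le> (\<lambda>(k, l). y ^ (k * l) / (fact k ^ l * fact l)) x" using kl y by simp
  qed
qed

lemma part2:
  "(\<Sum>\<^sub>\<infinity>(k::nat, l::nat)\<in>{1..} \<times> {1..}. 1 / ((fact k) ^ l * fact l :: real)) \<le> exp 2"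
proof -
  have e1: "(\<lambda>n. 1 / fact n :: real) summable_on {1..}" using exp_summable_sub[of 1] by simp
  have eU: "((\<lambda>n. 1 / fact n :: real) has_sum exp 1) UNIV" using exp_has_sum[of 1] by simp
  have A: "infsum (\<lambda>n. 1 / fact n :: real) {1..} \<le> exp 1"
    using infsum_mono2[OF e1 has_sum_imp_summable[OF eU]] infsumI[OF eU] by simp
  have A0: "0 \<le> infsum (\<lambda>n. 1 / fact n :: real) {1..}" by (rule infsum_nonneg) auto
  have P: "(\<lambda>(k,l). (1 / fact k) * (1 / fact l) :: real) summable_on (({1..}::nat set) \<times> ({1..}::nat set))"
    and Pe: "infsum (\<lambda>(k,l). (1 / fact k) * (1 / fact l) :: real) (({1..}::nat set) \<times> ({1..}::nat set))
       = infsum (\<lambda>n. 1 / fact n :: real) {1..} * infsum (\<lambda>n. 1 / fact n :: real) {1..}"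
    by (rule prod_summable[OF e1 e1]; simp)+
  have S: "(\<lambda>(k::nat, l::nat). 1 / ((fact k) ^ l * fact l :: real)) summable_on ({1..} \<times> {1..})"
    using part1[of 1] by simp
  have "(\<Sum>\<^sub>\<infinity>(k::nat, l::nat)\<in>{1..} \<times> {1..}. 1 / ((fact k) ^ l * fact l :: real))
      \<le> infsum (\<lambda>(k,l). (1 / fact k) * (1 / fact l) :: real) (({1..}::nat set) \<times> ({1..}::nat set))"
  proof (rule infsum_mono[OF S P])
    fix x :: "nat \<times> nat" assume x: "x \<in> {1..} \<times> {1..}"
    obtain k l where kl: "x = (k, l)" by (cases x)
    have l1: "l \<ge> 1" using x kl by auto
    have f1: "(1::real) \<le> fact k" by simp
    have "(1 / fact k :: real) ^ l \<le> (1 / fact k) * 1 ^ l" by (rule pow_le_aux) (use f1 l1 in auto)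
    then have "(1 / fact k :: real) ^ l / fact l \<le> (1 / fact k) * 1 ^ l / fact l"
      by (rule divide_right_mono) simp
    then show "(\<lambda>(k, l). 1 / (fact k ^ l * fact l :: real)) x \<le> (\<lambda>(k, l). 1 / fact k * (1 / fact l)) x"
      using kl by (simp add: power_divide)
  qed
  also have "\<dots> \<le> exp 1 * exp 1" unfolding Pe by (rule mult_mono) (use A A0 in auto)
  also have "\<dots> = exp 2" by (simp flip: exp_add)
  finally show ?thesis .
qed

theorem lemma6p1:
  shows "(\<forall>y::real. y \<ge> 0 \<longrightarrow>
           (\<lambda>(k::nat, l::nat). y ^ (k * l) / ((fact k) ^ l * fact l))
             summable_on ({1..} \<times> {1..})) \<and>
         ((\<Sum>\<^sub>\<infinity>(k::nat, l::nat)\<in>{1..} \<times> {1..}. 1 / ((fact k) ^ l * fact l :: real)) \<le> exp 2)"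
  using part1 part2 by blast

end
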